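(* Let $\mathbf{A}\in\mathbb{R}^{m\times n}$ with $\|\mathbf{A}\|_\infty\le1$, let $\rho>0$, and let $r(x,y)=\rho\sum_{i\in[m]}x_i\log x_i+\frac1\rho x^\top|\mathbf{A}|(y\circ y)$. Let $\delta>0$, let $\bar{x}\in\Delta^m$ have strictly positive entries, let $y\in[0,1]^n$, and let $x=\mathcal{O}_\delta(\bar{x})$. Set $\bar z=(\bar x,y)$ and $z=(x,y)$. Then for every $w\in\Delta^m\times[0,1]^n$, $$V^r_z(w)-V^r_{\bar z}(w)\le\Big(\rho+\frac8\rho\Big)m\delta.$$
   Context: Padding oracle: for $\delta>0$ and $\bar x\in\Delta^m$, $\mathcal{O}_\delta(\bar x)=\hat x/\|\hat x\|_1$ where $\hat x_i=\max(\bar x_i,\delta)$. $V^r_{z'}(w)=r(w)-r(z')-\langle\nabla r(z'),w-z'\rangle$ is the Bregman divergence, with the convention $0\log 0=0$. $\|\mathbf{A}\|_\infty=\max_i\sum_j|\mathbf{A}_{ij}|$; $|\mathbf{A}|$ is entrywise absolute value and $y\circ y$ the entrywise square; $\Delta^m$ is the probability simplex. *)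

theory Defs
  imports "HOL-Analysis.Analysis"
begin

definition in_simplex :: "real^'m \<Rightarrow> bool" where
  "in_simplex x \<longleftrightarrow> (\<forall>i. 0 \<le> x $ i) \<and> (\<Sum>i\<in>UNIV. x $ i) = 1"

definition in_box01 :: "real^'n \<Rightarrow> bool" where
  "in_box01 y \<longleftrightarrow> (\<forall>j. 0 \<le> y $ j \<and> y $ j \<le> 1)"

definition mat_inf_norm :: "real^'n^'m \<Rightarrow> real" where
  "mat_inf_norm A = Max (range (\<lambda>i. \<Sum>j\<in>UNIV. \<bar>A $ i $ j\<bar>))"

definition pad_oracle :: "real \<Rightarrow> real^'m \<Rightarrow> real^'m" where
  "pad_oracle \<delta> xb = (let xh = (\<chi> i. max (xb $ i) \<delta>) in
       (\<chi> i. xh $ i / (\<Sum>k\<in>UNIV. \<bar>xh $ k\<bar>)))"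

text \<open>The regularizer r(x,y) = rho sum x_i log x_i + (1/rho) x^T |A| (y o y);
  note Isabelle's ln 0 = 0 realises the convention 0 log 0 = 0.\<close>
definition reg_r :: "real^'n^'m \<Rightarrow> real \<Rightarrow> ((real^'m) \<times> (real^'n)) \<Rightarrow> real" where
  "reg_r A \<rho> z = \<rho> * (\<Sum>i\<in>UNIV. fst z $ i * ln (fst z $ i))
      + (1 / \<rho>) * (\<Sum>i\<in>UNIV. \<Sum>j\<in>UNIV. fst z $ i * \<bar>A $ i $ j\<bar> * (snd z $ j)\<^sup>2)"

definition bregman :: "('a::real_normed_vector \<Rightarrow> real) \<Rightarrow> 'a \<Rightarrow> 'a \<Rightarrow> real" where
  "bregman r z' w = r w - r z' - frechet_derivative r (at z') (w - z')"

end

theory Submission imports Defs begin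
lemma hd_fst[derivative_intros]: "((\<lambda>z. fst z $ i) has_derivative (\<lambda>h. fst h $ i)) F"
  by (rule bounded_linear_imp_has_derivative, rule bounded_linear_compose[OF bounded_linear_vec_nth bounded_linear_fst])
lemma hd_snd[derivative_intros]: "((\<lambda>z. snd z $ i) has_derivative (\<lambda>h. snd h $ i)) F"
  by (rule bounded_linear_imp_has_derivative, rule bounded_linear_compose[OF bounded_linear_vec_nth bounded_linear_snd])
lemma hd_reg:
  fixes A :: "real^'n^'m" and x :: "real^'m" and y :: "real^'n"
  assumes "\<forall>i. x $ i > 0"
  shows "(reg_r A \<rho> has_derivative (\<lambda>h. \<rho> * (\<Sum>i\<in>UNIV. (ln (x$i) + 1) * fst h $ i)
     + (1/\<rho>) * (\<Sum>i\<in>UNIV. \<Sum>j\<in>UNIV. fst h $ i * \<bar>A $ i $ j\<bar> * (y $ j)\<^sup>2 + x $ i * \<bar>A $ i $ j\<bar> * (2 * y $ j * snd h $ j)))) (at (x,y))"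
  unfolding reg_r_def
  apply (rule derivative_eq_intros refl | simp add: assms)+
  apply (rule ext)
  apply (rule arg_cong2[where f="(+)"])
  using assms apply (auto intro!: sum.cong simp: field_simps)
  apply (metis less_irrefl)
  done
lemma breg_formula:
  fixes A :: "real^'n^'m" and x :: "real^'m" and y :: "real^'n"
  assumes "\<forall>i. x $ i > 0"
  shows "bregman (reg_r A \<rho>) (x,y) w = (\<Sum>i\<in>UNIV. \<rho> * (fst w $ i * ln (fst w $ i) - x$i * ln (x$i) - (ln (x$i) + 1) * (fst w $ i - x $ i))
     + (1/\<rho>) * (\<Sum>j\<in>UNIV. fst w $ i * \<bar>A $ i $ j\<bar> * (snd w $ j)\<^sup>2 - x $ i * \<bar>A $ i $ j\<bar> * (y $ j)\<^sup>2
        - (fst w $ i - x $ i) * \<bar>A $ i $ j\<bar> * (y $ j)\<^sup>2 - x $ i * \<bar>A $ i $ j\<bar> * (2 * y $ j * (snd w $ j - y $ j))))"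
  unfolding bregman_def frechet_derivative_at[OF hd_reg[OF assms], symmetric]
  apply (simp add: reg_r_def sum.distrib sum_subtractf sum_distrib_left right_diff_distrib sum_divide_distrib[symmetric] diff_divide_distrib[symmetric] add_divide_distrib[symmetric])
  by (simp add: diff_divide_distrib add_divide_distrib)
theorem mainTheorem3:
  fixes A :: "real^'n^'m" and \<rho> \<delta> :: real
    and xb :: "real^'m" and y :: "real^'n"
    and w :: "(real^'m) \<times> (real^'n)"
  assumes "mat_inf_norm A \<le> 1"
    and "\<rho> > 0"
    and "\<delta> > 0"
    and "in_simplex xb" and "\<forall>i. xb $ i > 0"
    and "in_box01 y"
    and "in_simplex (fst w)" and "in_box01 (snd w)"
  shows "bregman (reg_r A \<rho>) (pad_oracle \<delta> xb, y) w
           - bregman (reg_r A \<rho>) (xb, y) w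
         \<le> (\<rho> + 8 / \<rho>) * real CARD('m) * \<delta>"
proof -
  define u where "u = fst w"
  define v where "v = snd w"
  define x where "x = pad_oracle \<delta> xb"
  define S where "S = (\<Sum>k\<in>UNIV. max (xb $ k) \<delta>)"
  have u0: "\<forall>i. 0 \<le> u $ i" and u1: "(\<Sum>i\<in>UNIV. u $ i) = 1"
    using assms(7) unfolding in_simplex_def u_def by auto
  have xb1: "(\<Sum>i\<in>UNIV. xb $ i) = 1" using assms(4) unfolding in_simplex_def by auto
  have v01: "\<forall>j. 0 \<le> v $ j \<and> v $ j \<le> 1" using assms(8) unfolding in_box01_def v_def by auto
  have y01: "\<forall>j. 0 \<le> y $ j \<and> y $ j \<le> 1" using assms(6) unfolding in_box01_def by auto
  have hx: "\<And>i. x $ i = max (xb $ i) \<delta> / S"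
  proof -
    fix i
    have "(\<Sum>k\<in>UNIV. \<bar>max (xb $ k) \<delta>\<bar>) = S" unfolding S_def
      using assms(3) by (intro sum.cong) auto
    then show "x $ i = max (xb $ i) \<delta> / S" unfolding x_def pad_oracle_def Let_def by simp
  qed
  have S1: "S \<ge> 1"
  proof -
    have "(\<Sum>k\<in>UNIV. xb $ k) \<le> S" unfolding S_def by (intro sum_mono) auto
    then show ?thesis using xb1 by simp
  qed
  have Sm: "S - 1 \<le> real CARD('m) * \<delta>"
  proof -
    have "S - 1 = (\<Sum>k\<in>UNIV. max (xb $ k) \<delta> - xb $ k)" unfolding S_def using xb1
      by (simp add: sum_subtractf)
    also have "\<dots> \<le> (\<Sum>k\<in>(UNIV::'m set). \<delta>)" by (rule sum_mono) (use assms(5) assms(3) less_imp_le in \<open>auto simp: max_def\<close>)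
    finally show ?thesis by simp
  qed
  have xpos: "\<forall>i. x $ i > 0" using hx S1 assms(3) by (simp add: less_max_iff_disj)
  have x1: "(\<Sum>i\<in>UNIV. x $ i) = 1" using S1 unfolding hx
    by (simp add: sum_divide_distrib[symmetric] S_def[symmetric])
  have row: "\<And>i. (\<Sum>j\<in>UNIV. \<bar>A $ i $ j\<bar>) \<le> 1"
  proof -
    fix i
    have "(\<Sum>j\<in>UNIV. \<bar>A $ i $ j\<bar>) \<le> mat_inf_norm A" unfolding mat_inf_norm_def
      by (rule Max_ge) auto
    then show "(\<Sum>j\<in>UNIV. \<bar>A $ i $ j\<bar>) \<le> 1" using assms(1) by simp
  qed
  define T where "T i = (\<rho> * (u $ i * ln (u $ i) - x$i * ln (x$i) - (ln (x$i) + 1) * (u $ i - x $ i))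
     + (1/\<rho>) * (\<Sum>j\<in>UNIV. u $ i * \<bar>A $ i $ j\<bar> * (v $ j)\<^sup>2 - x $ i * \<bar>A $ i $ j\<bar> * (y $ j)\<^sup>2
        - (u $ i - x $ i) * \<bar>A $ i $ j\<bar> * (y $ j)\<^sup>2 - x $ i * \<bar>A $ i $ j\<bar> * (2 * y $ j * (v $ j - y $ j))))
   - (\<rho> * (u $ i * ln (u $ i) - xb$i * ln (xb$i) - (ln (xb$i) + 1) * (u $ i - xb $ i))
     + (1/\<rho>) * (\<Sum>j\<in>UNIV. u $ i * \<bar>A $ i $ j\<bar> * (v $ j)\<^sup>2 - xb $ i * \<bar>A $ i $ j\<bar> * (y $ j)\<^sup>2
        - (u $ i - xb $ i) * \<bar>A $ i $ j\<bar> * (y $ j)\<^sup>2 - xb $ i * \<bar>A $ i $ j\<bar> * (2 * y $ j * (v $ j - y $ j))))" for i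
  have D: "bregman (reg_r A \<rho>) (pad_oracle \<delta> xb, y) w - bregman (reg_r A \<rho>) (xb, y) w
      = (\<Sum>i\<in>UNIV. T i)"
    unfolding x_def[symmetric] breg_formula[OF xpos] breg_formula[OF assms(5)] T_def u_def v_def
    by (simp add: sum_subtractf)
  have Tb: "T i \<le> \<rho> * (u $ i * ln S + x $ i - xb $ i) + (2/\<rho>) * \<bar>xb $ i - x $ i\<bar>" for i
  proof -
    have T_eq: "T i = \<rho> * (u $ i * (ln (xb $ i) - ln (x $ i)) + x $ i - xb $ i)
       + (1/\<rho>) * (\<Sum>j\<in>UNIV. 2 * ((xb $ i - x $ i) * (y $ j * (v $ j - y $ j))) * \<bar>A $ i $ j\<bar>)"
    proof -
      have "T i = \<rho> * (u $ i * (ln (xb $ i) - ln (x $ i)) + x $ i - xb $ i)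
       + (1/\<rho>) * ((\<Sum>j\<in>UNIV. u $ i * \<bar>A $ i $ j\<bar> * (v $ j)\<^sup>2 - x $ i * \<bar>A $ i $ j\<bar> * (y $ j)\<^sup>2
        - (u $ i - x $ i) * \<bar>A $ i $ j\<bar> * (y $ j)\<^sup>2 - x $ i * \<bar>A $ i $ j\<bar> * (2 * y $ j * (v $ j - y $ j)))
        - (\<Sum>j\<in>UNIV. u $ i * \<bar>A $ i $ j\<bar> * (v $ j)\<^sup>2 - xb $ i * \<bar>A $ i $ j\<bar> * (y $ j)\<^sup>2
        - (u $ i - xb $ i) * \<bar>A $ i $ j\<bar> * (y $ j)\<^sup>2 - xb $ i * \<bar>A $ i $ j\<bar> * (2 * y $ j * (v $ j - y $ j))))"
        unfolding T_def by (simp add: algebra_simps)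
      also have "\<dots> = \<rho> * (u $ i * (ln (xb $ i) - ln (x $ i)) + x $ i - xb $ i)
       + (1/\<rho>) * (\<Sum>j\<in>UNIV. 2 * ((xb $ i - x $ i) * (y $ j * (v $ j - y $ j))) * \<bar>A $ i $ j\<bar>)"
        by (simp only: sum_subtractf[symmetric]) (intro arg_cong2[where f="(+)"] refl arg_cong2[where f="(*)"] sum.cong; simp add: algebra_simps power2_eq_square)
      finally show ?thesis .
    qed
    have l1: "ln (xb $ i) - ln (x $ i) \<le> ln S"
    proof -
      have "ln (x $ i) = ln (max (xb $ i) \<delta>) - ln S" unfolding hx using S1 assms(3)
        by (simp add: ln_div less_max_iff_disj)
      moreover have "ln (xb $ i) \<le> ln (max (xb $ i) \<delta>)" using assms(5)[rule_format, of i] assms(3) by (simp add: less_max_iff_disj)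
      ultimately show ?thesis by simp
    qed
    have e1: "u $ i * (ln (xb $ i) - ln (x $ i)) \<le> u $ i * ln S"
      using l1 u0 by (simp add: mult_left_mono)
    have yv: "\<bar>y $ j * (v $ j - y $ j)\<bar> \<le> 1" for j
    proof -
      have "\<bar>v $ j - y $ j\<bar> \<le> 1" using v01[rule_format, of j] y01[rule_format, of j] by (auto simp: abs_le_iff)
      moreover have "\<bar>y $ j\<bar> \<le> 1" using y01 by auto
      ultimately show ?thesis by (simp add: abs_mult mult_le_one)
    qed
    have "(\<Sum>j\<in>UNIV. 2 * ((xb $ i - x $ i) * (y $ j * (v $ j - y $ j))) * \<bar>A $ i $ j\<bar>)
        \<le> (\<Sum>j\<in>UNIV. 2 * \<bar>xb $ i - x $ i\<bar> * \<bar>A $ i $ j\<bar>)"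
    proof (intro sum_mono mult_right_mono)
      fix j
      have "(xb $ i - x $ i) * (y $ j * (v $ j - y $ j)) \<le> \<bar>xb $ i - x $ i\<bar> * \<bar>y $ j * (v $ j - y $ j)\<bar>"
        by (metis abs_ge_self abs_mult)
      also have "\<dots> \<le> \<bar>xb $ i - x $ i\<bar>" using yv[of j] by (simp add: mult_left_le)
      finally show "2 * ((xb $ i - x $ i) * (y $ j * (v $ j - y $ j))) \<le> 2 * \<bar>xb $ i - x $ i\<bar>" by simp
    qed simp
    also have "\<dots> = 2 * \<bar>xb $ i - x $ i\<bar> * (\<Sum>j\<in>UNIV. \<bar>A $ i $ j\<bar>)" by (simp add: sum_distrib_left)
    also have "\<dots> \<le> 2 * \<bar>xb $ i - x $ i\<bar>" using row[of i] by (simp add: mult_left_le)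
    finally have g: "(1/\<rho>) * (\<Sum>j\<in>UNIV. 2 * ((xb $ i - x $ i) * (y $ j * (v $ j - y $ j))) * \<bar>A $ i $ j\<bar>)
       \<le> (1/\<rho>) * (2 * \<bar>xb $ i - x $ i\<bar>)" using assms(2) by (intro mult_left_mono) auto
    have h1: "\<rho> * (u $ i * (ln (xb $ i) - ln (x $ i)) + x $ i - xb $ i) \<le> \<rho> * (u $ i * ln S + x $ i - xb $ i)"
      using e1 assms(2) by (intro mult_left_mono) auto
    have h2: "(1/\<rho>) * (2 * \<bar>xb $ i - x $ i\<bar>) = (2/\<rho>) * \<bar>xb $ i - x $ i\<bar>" by simp
    show ?thesis unfolding T_eq using g h1 h2 by linarith
  qed
  have absb: "(\<Sum>i\<in>UNIV. \<bar>xb $ i - x $ i\<bar>) \<le> 2 * (S - 1)"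
  proof -
    have "\<bar>xb $ i - x $ i\<bar> \<le> (max (xb $ i) \<delta> - xb $ i) + (max (xb $ i) \<delta> - x $ i)" for i
    proof -
      have "x $ i \<le> max (xb $ i) \<delta>" unfolding hx using S1 assms(3)
        using divide_left_mono[of 1 S "max (xb $ i) \<delta>"] by (simp add: le_max_iff_disj)
      then show ?thesis by auto
    qed
    then have "(\<Sum>i\<in>UNIV. \<bar>xb $ i - x $ i\<bar>) \<le> (\<Sum>i\<in>UNIV. (max (xb $ i) \<delta> - xb $ i) + (max (xb $ i) \<delta> - x $ i))"
      by (intro sum_mono)
    also have "\<dots> = 2 * (S - 1)" using xb1 x1 unfolding S_def by (simp add: sum.distrib sum_subtractf sum_distrib_left[symmetric] sum_negf)
    finally show ?thesis .
  qed
  have "(\<Sum>i\<in>UNIV. T i) \<le> (\<Sum>i\<in>UNIV. \<rho> * (u $ i * ln S + x $ i - xb $ i) + (2/\<rho>) * \<bar>xb $ i - x $ i\<bar>)"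
    by (intro sum_mono Tb)
  also have "\<dots> = \<rho> * (ln S * (\<Sum>i\<in>UNIV. u $ i) + (\<Sum>i\<in>UNIV. x $ i) - (\<Sum>i\<in>UNIV. xb $ i)) + (2/\<rho>) * (\<Sum>i\<in>UNIV. \<bar>xb $ i - x $ i\<bar>)"
    by (simp add: sum.distrib sum_subtractf sum_distrib_left algebra_simps)
  also have "\<dots> = \<rho> * ln S + (2/\<rho>) * (\<Sum>i\<in>UNIV. \<bar>xb $ i - x $ i\<bar>)" using u1 x1 xb1 by simp
  also have "\<dots> \<le> \<rho> * (S - 1) + (2/\<rho>) * (2 * (S - 1))"
    using assms(2) S1 absb ln_le_minus_one[of S]
    by (intro add_mono mult_left_mono) auto
  also have "\<dots> = (\<rho> + 4/\<rho>) * (S - 1)" using assms(2) by (simp add: field_simps)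
  also have "\<dots> \<le> (\<rho> + 8/\<rho>) * (S - 1)" using assms(2) S1 by (intro mult_right_mono) (auto simp: divide_right_mono)
  also have "\<dots> \<le> (\<rho> + 8/\<rho>) * (real CARD('m) * \<delta>)" using assms(2) Sm
    by (intro mult_left_mono) (auto intro: add_nonneg_nonneg)
  finally show ?thesis unfolding D by (simp add: mult.assoc)
qed
end
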